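(* Consider the equation $u_{tx}=2u_yu_{xx}+4u_xu_{xy}-u_{xxxy}$ and the hierarchy of symmetries $\{\chi_{2k+1}\}_{k\ge0}$ defined by $\chi_1=u_x$ and $\mathcal{R}_0(\chi_{2k+1})=-\chi_{2k+3}$, where $\Psi=\mathcal{R}_0(\Phi)$ iff $\Psi_x=4u_x\Phi_x+2u_{xx}\Phi-\Phi_{xxx}$, $\Psi_y=\Phi_t-2u_y\Phi_x+2u_{xy}\Phi$. Then this hierarchy is commutative: the Jacobi bracket $\{\chi_{2i+1},\chi_{2j+1}\}$ vanishes for all $i,j\ge 0$.
   Context: Symmetries are generating functions $\phi$ satisfying the linearized equation $D_xD_t\phi-2u_{xx}D_y\phi-2u_yD_x^2\phi-4u_{xy}D_x\phi-4u_xD_xD_y\phi+D_x^3D_y\phi=0$ on solutions. The symmetries $\chi_{2k+1}$ are local functions of $u$ and its $x$-derivatives (e.g. $\chi_3=u_{xxx}-3u_x^2$). The Jacobi bracket of generating functions $\phi_1,\phi_2$ is $\{\phi_1,\phi_2\}=\sum_\sigma\big(D_\sigma(\phi_1)\partial\phi_2/\partial u_\sigma-D_\sigma(\phi_2)\partial\phi_1/\partial u_\sigma\big)$, the generating function of the commutator of the evolutionary vector fields $\mathrm{Ev}_{\phi_1},\mathrm{Ev}_{\phi_2}$. *)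

theory Defs
  imports "HOL-Analysis.Analysis"
begin

text \<open>A point p assigns to (i,j) the value
of u_{x^i y^j}.  The mixed derivatives u_{x^i y^j t} with i >= 1 are eliminated via the
equation u_{tx} = E; the only t-coordinate a function of x-derivatives can see is u_t,
which is an independent internal coordinate and is passed separately.\<close>

type_synonym jet = "nat \<times> nat \<Rightarrow> real"
type_synonym dfun = "jet \<Rightarrow> real"

inductive dpoly :: "dfun \<Rightarrow> bool" where
  dpoly_const: "dpoly (\<lambda>p. c)"
| dpoly_coord: "dpoly (\<lambda>p. p \<sigma>)"
| dpoly_add: "dpoly F \<Longrightarrow> dpoly G \<Longrightarrow> dpoly (\<lambda>p. F p + G p)"
| dpoly_mult: "dpoly F \<Longrightarrow> dpoly G \<Longrightarrow> dpoly (\<lambda>p. F p * G p)"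

definition depends_below :: "nat \<Rightarrow> dfun \<Rightarrow> bool" where
  "depends_below N F \<longleftrightarrow>
     (\<forall>p q. (\<forall>i j. i < N \<and> j < N \<longrightarrow> p (i, j) = q (i, j)) \<longrightarrow> F p = F q)"

definition dsupp :: "dfun \<Rightarrow> nat" where
  "dsupp F = (SOME N. depends_below N F)"

definition pd :: "nat \<times> nat \<Rightarrow> dfun \<Rightarrow> dfun" where
  "pd \<sigma> F = (\<lambda>p. deriv (\<lambda>s. F (p(\<sigma> := s))) (p \<sigma>))"

definition Dx :: "dfun \<Rightarrow> dfun" where
  "Dx F = (\<lambda>p. \<Sum>i<dsupp F. \<Sum>j<dsupp F. pd (i, j) F p * p (Suc i, j))"

definition Dy :: "dfun \<Rightarrow> dfun" where
  "Dy F = (\<lambda>p. \<Sum>i<dsupp F. \<Sum>j<dsupp F. pd (i, j) F p * p (i, Suc j))"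

definition Eqn :: dfun where
  "Eqn = (\<lambda>p. 2 * p (0, 1) * p (2, 0) + 4 * p (1, 0) * p (1, 1) - p (3, 1))"

definition xfun :: "dfun \<Rightarrow> bool" where
  "xfun F \<longleftrightarrow> dpoly F \<and> (\<forall>p q. (\<forall>i. p (i, 0) = q (i, 0)) \<longrightarrow> F p = F q)"

text \<open>Total t-derivative on solutions, for a function F of u and its x-derivatives;
ut is the value of the (internal) coordinate u_t, and u_{x^i t} = D_x^{i-1} E for i >= 1.\<close>
definition Dt_x :: "dfun \<Rightarrow> real \<Rightarrow> dfun" where
  "Dt_x F ut = (\<lambda>p. pd (0, 0) F p * ut
       + (\<Sum>i\<in>{1..<dsupp F}. pd (i, 0) F p * (Dx ^^ (i - 1)) Eqn p))"

definition R0 :: "dfun \<Rightarrow> dfun \<Rightarrow> bool" where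
  "R0 \<Phi> \<Psi> \<longleftrightarrow>
     Dx \<Psi> = (\<lambda>p. 4 * p (1, 0) * Dx \<Phi> p + 2 * p (2, 0) * \<Phi> p - (Dx ^^ 3) \<Phi> p)
   \<and> (\<forall>ut. Dy \<Psi> = (\<lambda>p. Dt_x \<Phi> ut p - 2 * p (0, 1) * Dx \<Phi> p + 2 * p (1, 1) * \<Phi> p))"

text \<open>Jacobi bracket; only the x,y-jet coordinates are summed since the arguments do not
depend on coordinates involving t-derivatives.\<close>
definition jbr :: "dfun \<Rightarrow> dfun \<Rightarrow> dfun" where
  "jbr F G = (\<lambda>p. let N = max (dsupp F) (dsupp G) in
     \<Sum>i<N. \<Sum>j<N. (Dx ^^ i) ((Dy ^^ j) F) p * pd (i, j) G p
                  - (Dx ^^ i) ((Dy ^^ j) G) p * pd (i, j) F p)"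

end

theory Submission imports Defs begin

lemma dpoly_neg: "dpoly F \<Longrightarrow> dpoly (\<lambda>p. - F p)"
proof -
  assume "dpoly F"
  then have "dpoly (\<lambda>p. (-1) * F p)" by (intro dpoly_mult dpoly_const)
  then show ?thesis by simp
qed

lemma dpoly_diff:
  "dpoly F \<Longrightarrow> \<exists>F'. dpoly F' \<and> (\<forall>q. ((\<lambda>s. F (q(\<sigma>:=s))) has_real_derivative F' q) (at (q \<sigma>)))"
proof (induction rule: dpoly.induct)
  case (dpoly_const c)
  show ?case by (intro exI[of _ "\<lambda>p. 0"]) (auto intro: dpoly.dpoly_const)
next
  case (dpoly_coord \<tau>)
  show ?case
  proof (intro exI[of _ "\<lambda>p. if \<sigma> = \<tau> then 1 else 0"] conjI allI)
    show "dpoly (\<lambda>p. if \<sigma> = \<tau> then 1 else 0)" by (rule dpoly.dpoly_const)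
    fix q :: jet
    show "((\<lambda>s. (q(\<sigma> := s)) \<tau>) has_real_derivative (if \<sigma> = \<tau> then 1 else 0)) (at (q \<sigma>))"
    proof (cases "\<sigma> = \<tau>")
      case True then show ?thesis by (simp add: DERIV_ident)
    next
      case False then show ?thesis by simp
    qed
  qed
next
  case (dpoly_add F G)
  then obtain F' G' where "dpoly F'" "dpoly G'"
    and dF: "\<forall>q. ((\<lambda>s. F (q(\<sigma>:=s))) has_real_derivative F' q) (at (q \<sigma>))"
    and dG: "\<forall>q. ((\<lambda>s. G (q(\<sigma>:=s))) has_real_derivative G' q) (at (q \<sigma>))" by blast
  show ?case
  proof (intro exI[of _ "\<lambda>p. F' p + G' p"] conjI allI)
    show "dpoly (\<lambda>p. F' p + G' p)" using \<open>dpoly F'\<close> \<open>dpoly G'\<close> by (rule dpoly.dpoly_add)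
    fix q :: jet
    show "((\<lambda>s. F (q(\<sigma>:=s)) + G (q(\<sigma>:=s))) has_real_derivative F' q + G' q) (at (q \<sigma>))"
      using dF dG by (intro DERIV_add) auto
  qed
next
  case (dpoly_mult F G)
  then obtain F' G' where "dpoly F'" "dpoly G'"
    and dF: "\<forall>q. ((\<lambda>s. F (q(\<sigma>:=s))) has_real_derivative F' q) (at (q \<sigma>))"
    and dG: "\<forall>q. ((\<lambda>s. G (q(\<sigma>:=s))) has_real_derivative G' q) (at (q \<sigma>))" by blast
  show ?case
  proof (intro exI[of _ "\<lambda>p. F' p * G p + F p * G' p"] conjI allI)
    show "dpoly (\<lambda>p. F' p * G p + F p * G' p)"
      using \<open>dpoly F'\<close> \<open>dpoly G'\<close> dpoly_mult.hyps by (intro dpoly.dpoly_add dpoly.dpoly_mult)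
    fix q :: jet
    have "((\<lambda>s. F (q(\<sigma>:=s)) * G (q(\<sigma>:=s))) has_real_derivative
        F' q * G (q(\<sigma> := q \<sigma>)) + G' q * F (q(\<sigma> := q \<sigma>))) (at (q \<sigma>))"
      using dF dG by (intro DERIV_mult) auto
    then show "((\<lambda>s. F (q(\<sigma>:=s)) * G (q(\<sigma>:=s))) has_real_derivative
        F' q * G q + F q * G' q) (at (q \<sigma>))" by (simp add: mult.commute)
  qed
qed

lemma pd_eq: "((\<lambda>s. F (q(\<sigma>:=s))) has_real_derivative D) (at (q \<sigma>)) \<Longrightarrow> pd \<sigma> F q = D"
  unfolding pd_def by (rule DERIV_imp_deriv)

lemma pd_deriv: "dpoly F \<Longrightarrow> ((\<lambda>s. F (q(\<sigma>:=s))) has_real_derivative pd \<sigma> F q) (at (q \<sigma>))"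
proof -
  assume "dpoly F"
  then obtain F' where "\<forall>q. ((\<lambda>s. F (q(\<sigma>:=s))) has_real_derivative F' q) (at (q \<sigma>))"
    using dpoly_diff by blast
  then show ?thesis using pd_eq by metis
qed

lemma dpoly_pd: "dpoly F \<Longrightarrow> dpoly (pd \<sigma> F)"
proof -
  assume "dpoly F"
  then obtain F' where "dpoly F'" "\<forall>q. ((\<lambda>s. F (q(\<sigma>:=s))) has_real_derivative F' q) (at (q \<sigma>))"
    using dpoly_diff by blast
  moreover then have "pd \<sigma> F = F'" using pd_eq by blast
  ultimately show ?thesis by simp
qed

lemma pd_add: "dpoly F \<Longrightarrow> dpoly G \<Longrightarrow> pd \<sigma> (\<lambda>p. F p + G p) q = pd \<sigma> F q + pd \<sigma> G q"
  by (intro pd_eq DERIV_add pd_deriv)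

lemma pd_mult: "dpoly F \<Longrightarrow> dpoly G \<Longrightarrow> pd \<sigma> (\<lambda>p. F p * G p) q = pd \<sigma> F q * G q + F q * pd \<sigma> G q"
proof -
  assume "dpoly F" "dpoly G"
  then have "((\<lambda>s. F (q(\<sigma>:=s)) * G (q(\<sigma>:=s))) has_real_derivative
        F (q(\<sigma> := q \<sigma>)) * pd \<sigma> G q + pd \<sigma> F q * G (q(\<sigma> := q \<sigma>))) (at (q \<sigma>))"
    by (intro DERIV_mult' pd_deriv)
  then have "pd \<sigma> (\<lambda>p. F p * G p) q = F q * pd \<sigma> G q + pd \<sigma> F q * G q" by (intro pd_eq) simp
  then show ?thesis by simp
qed

lemma pd_neg: "dpoly F \<Longrightarrow> pd \<sigma> (\<lambda>p. - F p) q = - pd \<sigma> F q"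
  by (intro pd_eq DERIV_minus pd_deriv)

lemma pd_constf: "(\<And>s. F (q(\<sigma>:=s)) = c) \<Longrightarrow> pd \<sigma> F q = 0"
proof -
  assume "\<And>s. F (q(\<sigma>:=s)) = c"
  then have "(\<lambda>s. F (q(\<sigma>:=s))) = (\<lambda>s. c)" by auto
  then show ?thesis by (intro pd_eq) simp
qed

lemma pd_coord: "pd \<sigma> (\<lambda>p. p \<tau>) q = (if \<sigma> = \<tau> then 1 else 0)"
  using dpoly_diff[OF dpoly_coord[of \<tau>], of \<sigma>] pd_eq
  by (cases "\<sigma> = \<tau>") (auto intro!: pd_eq DERIV_ident)


lemma depends_below_mono:
  assumes "depends_below M F" "M \<le> N" shows "depends_below N F"
  unfolding depends_below_def
proof (intro allI impI)
  fix p q :: jet assume h: "\<forall>i j. i < N \<and> j < N \<longrightarrow> p (i, j) = q (i, j)"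
  have "\<forall>i j. i < M \<and> j < M \<longrightarrow> p (i, j) = q (i, j)" using h assms(2) by auto
  then show "F p = F q" using assms(1) unfolding depends_below_def by blast
qed

lemma depends_below_comb:
  assumes "depends_below N F" "depends_below N G"
  shows "depends_below N (\<lambda>p. H (F p) (G p))"
  unfolding depends_below_def
proof (intro allI impI)
  fix p q :: jet assume "\<forall>i j. i < N \<and> j < N \<longrightarrow> p (i, j) = q (i, j)"
  moreover have "F p = F q" "G p = G q" using assms calculation unfolding depends_below_def by blast+
  ultimately show "H (F p) (G p) = H (F q) (G q)" by simp
qed

lemma dpoly_fin: "dpoly F \<Longrightarrow> \<exists>N. depends_below N F"
proof (induction rule: dpoly.induct)
  case (dpoly_const c) then show ?case by (auto simp: depends_below_def)
next
  case (dpoly_coord \<sigma>)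
  obtain a b where s: "\<sigma> = (a, b)" by (cases \<sigma>)
  show ?case
  proof (rule exI[of _ "Suc (max a b)"], unfold depends_below_def, intro allI impI)
    fix p q :: jet assume h: "\<forall>i j. i < Suc (max a b) \<and> j < Suc (max a b) \<longrightarrow> p (i, j) = q (i, j)"
    show "p \<sigma> = q \<sigma>" using h[rule_format, of a b] unfolding s by (simp add: less_Suc_eq_le)
  qed
next
  case (dpoly_add F G)
  then obtain N M where a: "depends_below N F" and b: "depends_below M G" by blast
  have "depends_below (max N M) F" by (rule depends_below_mono[OF a]) simp
  moreover have "depends_below (max N M) G" by (rule depends_below_mono[OF b]) simp
  ultimately show ?case by (intro exI[of _ "max N M"] depends_below_comb[where H="(+)"])
next
  case (dpoly_mult F G)
  then obtain N M where a: "depends_below N F" and b: "depends_below M G" by blast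
  have "depends_below (max N M) F" by (rule depends_below_mono[OF a]) simp
  moreover have "depends_below (max N M) G" by (rule depends_below_mono[OF b]) simp
  ultimately show ?case by (intro exI[of _ "max N M"] depends_below_comb[where H="(*)"])
qed


lemma dsupp: "dpoly F \<Longrightarrow> depends_below (dsupp F) F"
  unfolding dsupp_def using dpoly_fin by (rule someI_ex)

lemma pd_out: "depends_below N F \<Longrightarrow> \<not> (fst \<sigma> < N \<and> snd \<sigma> < N) \<Longrightarrow> pd \<sigma> F q = 0"
proof (rule pd_constf)
  fix s assume "depends_below N F" "\<not> (fst \<sigma> < N \<and> snd \<sigma> < N)"
  moreover have "\<forall>i j. i < N \<and> j < N \<longrightarrow> (q(\<sigma> := s)) (i, j) = q (i, j)"
    using calculation(2) by auto
  ultimately show "F (q(\<sigma> := s)) = F q" unfolding depends_below_def by blast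
qed

lemma common_supp: "dpoly F \<Longrightarrow> dpoly G \<Longrightarrow> \<exists>N. depends_below N F \<and> depends_below N G"
proof -
  assume "dpoly F" "dpoly G"
  then obtain N M where a: "depends_below N F" and b: "depends_below M G" using dpoly_fin by metis
  have "depends_below (max N M) F" by (rule depends_below_mono[OF a]) simp
  moreover have "depends_below (max N M) G" by (rule depends_below_mono[OF b]) simp
  ultimately show ?thesis by blast
qed

lemma sum2_ext:
  fixes N M :: nat
  assumes "N \<le> M" "\<And>i j. \<not> (i < N \<and> j < N) \<Longrightarrow> f i j = 0"
  shows "(\<Sum>i<N. \<Sum>j<N. f i j) = (\<Sum>i<M. \<Sum>j<M. (f i j :: real))"
proof -
  have "\<And>i. (\<Sum>j<M. f i j) = (\<Sum>j<N. f i j)"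
    by (rule sum.mono_neutral_right) (use assms in auto)
  then have "(\<Sum>i<M. \<Sum>j<M. f i j) = (\<Sum>i<M. \<Sum>j<N. f i j)" by simp
  also have "\<dots> = (\<Sum>i<N. \<Sum>j<N. f i j)"
    by (rule sum.mono_neutral_right) (use assms in \<open>auto intro!: sum.neutral\<close>)
  finally show ?thesis by simp
qed

lemma Dx_N:
  assumes "dpoly F" "depends_below N F"
  shows "Dx F p = (\<Sum>i<N. \<Sum>j<N. pd (i, j) F p * p (Suc i, j))"
proof -
  let ?M = "max N (dsupp F)"
  have d: "depends_below (dsupp F) F" using dsupp[OF assms(1)] .
  have "Dx F p = (\<Sum>i<?M. \<Sum>j<?M. pd (i, j) F p * p (Suc i, j))"
    unfolding Dx_def by (intro sum2_ext) (auto simp: pd_out[OF d])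
  also have "\<dots> = (\<Sum>i<N. \<Sum>j<N. pd (i, j) F p * p (Suc i, j))"
    by (intro sum2_ext[symmetric]) (auto simp: pd_out[OF assms(2)])
  finally show ?thesis .
qed

lemma dpoly_sum: "finite A \<Longrightarrow> (\<And>x. x \<in> A \<Longrightarrow> dpoly (f x)) \<Longrightarrow> dpoly (\<lambda>p. \<Sum>x\<in>A. f x p)"
proof (induction rule: finite_induct)
  case empty then show ?case by (simp add: dpoly.dpoly_const)
next
  case (insert x F) then show ?case by (simp add: dpoly.dpoly_add)
qed

lemma dpoly_Dx: "dpoly F \<Longrightarrow> dpoly (Dx F)"
  unfolding Dx_def
  by (intro dpoly_sum finite_lessThan dpoly_mult dpoly_pd dpoly_coord)

lemma dpoly_Dxn: "dpoly F \<Longrightarrow> dpoly ((Dx ^^ n) F)"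
  by (induction n) (auto simp: dpoly_Dx)

lemma Dx_add: "dpoly F \<Longrightarrow> dpoly G \<Longrightarrow> Dx (\<lambda>p. F p + G p) = (\<lambda>p. Dx F p + Dx G p)"
proof
  fix p assume F: "dpoly F" and G: "dpoly G"
  obtain K where a: "depends_below K F" "depends_below K G" using common_supp[OF F G] by blast
  have b: "depends_below K (\<lambda>p. F p + G p)" using a by (rule depends_below_comb)
  show "Dx (\<lambda>p. F p + G p) p = Dx F p + Dx G p"
    unfolding Dx_N[OF dpoly_add[OF F G] b] Dx_N[OF F a(1)] Dx_N[OF G a(2)]
    by (simp add: pd_add[OF F G] sum.distrib distrib_right)
qed

lemma Dx_mult: "dpoly F \<Longrightarrow> dpoly G \<Longrightarrow> Dx (\<lambda>p. F p * G p) = (\<lambda>p. F p * Dx G p + Dx F p * G p)"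
proof
  fix p assume F: "dpoly F" and G: "dpoly G"
  obtain K where a: "depends_below K F" "depends_below K G" using common_supp[OF F G] by blast
  have b: "depends_below K (\<lambda>p. F p * G p)" using a by (rule depends_below_comb)
  have "Dx (\<lambda>p. F p * G p) p = (\<Sum>i<K. \<Sum>j<K. F p * (pd (i, j) G p * p (Suc i, j)) + G p * (pd (i, j) F p * p (Suc i, j)))"
    unfolding Dx_N[OF dpoly_mult[OF F G] b] pd_mult[OF F G]
    by (intro sum.cong refl) (simp add: algebra_simps)
  also have "\<dots> = F p * Dx G p + Dx F p * G p"
    unfolding Dx_N[OF F a(1)] Dx_N[OF G a(2)]
    by (simp add: sum.distrib sum_distrib_left sum_distrib_right mult.commute)
  finally show "Dx (\<lambda>p. F p * G p) p = F p * Dx G p + Dx F p * G p" .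
qed

lemma Dx_neg: "dpoly F \<Longrightarrow> Dx (\<lambda>p. - F p) = (\<lambda>p. - Dx F p)"
proof
  fix p assume F: "dpoly F"
  obtain N where N: "depends_below N F" using dpoly_fin F by blast
  have b: "depends_below N (\<lambda>p. - F p)" using depends_below_comb[OF N N, where H="\<lambda>x y. - x"] by simp
  show "Dx (\<lambda>p. - F p) p = - Dx F p"
    unfolding Dx_N[OF dpoly_neg[OF F] b] Dx_N[OF F N]
    by (simp add: pd_neg[OF F] sum_negf)
qed

lemma Dxn_neg: "dpoly F \<Longrightarrow> (Dx ^^ n) (\<lambda>p. - F p) = (\<lambda>p. - (Dx ^^ n) F p)"
  by (induction n) (auto simp: Dx_neg dpoly_Dxn)

lemma Dx_coord: "Dx (\<lambda>p. p (a, b)) = (\<lambda>p. p (Suc a, b))"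
proof
  fix p :: jet
  let ?N = "Suc (max a b)"
  have N: "depends_below ?N (\<lambda>p. p (a, b))" unfolding depends_below_def
  proof (intro allI impI)
    fix p q :: jet assume h: "\<forall>i j. i < ?N \<and> j < ?N \<longrightarrow> p (i, j) = q (i, j)"
    show "p (a, b) = q (a, b)" using h[rule_format, of a b] by (simp add: less_Suc_eq_le)
  qed
  have "Dx (\<lambda>p. p (a, b)) p = (\<Sum>i<?N. \<Sum>j<?N. (if i = a then (if j = b then p (Suc a, b) else 0) else 0))"
    unfolding Dx_N[OF dpoly_coord N] pd_coord by (intro sum.cong refl) auto
  also have "\<dots> = p (Suc a, b)"
    by (simp add: less_Suc_eq_le cong: if_cong)
  finally show "Dx (\<lambda>p. p (a, b)) p = p (Suc a, b)" .
qed


lemma sum_j0: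
  assumes "\<And>i j. j \<noteq> 0 \<Longrightarrow> f i j = 0"
  shows "(\<Sum>i<(N::nat). \<Sum>j<N. f i j) = (\<Sum>i<N. (f i 0 :: real))"
proof (cases "N = 0")
  case True then show ?thesis by simp
next
  case False
  have "\<And>i. (\<Sum>j<N. f i j) = (\<Sum>j\<in>{0}. f i j)"
    by (rule sum.mono_neutral_right) (use False assms in auto)
  then show ?thesis by simp
qed

lemma sum1_ext:
  fixes N M :: nat
  assumes "N \<le> M" "\<And>i. N \<le> i \<Longrightarrow> f i = 0"
  shows "(\<Sum>i<N. f i) = (\<Sum>i<M. (f i :: real))"
  by (rule sum.mono_neutral_left) (use assms in auto)

lemma xfun_dpoly: "xfun F \<Longrightarrow> dpoly F"
  unfolding xfun_def by blast

lemma xfun_eq: "xfun F \<Longrightarrow> (\<And>i. p (i, 0) = q (i, 0)) \<Longrightarrow> F p = F q"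
  unfolding xfun_def by blast

lemma pd_y0: "xfun F \<Longrightarrow> j \<noteq> 0 \<Longrightarrow> pd (i, j) F q = 0"
  by (rule pd_constf[where c="F q"]) (erule xfun_eq, simp)

lemma xfun_pd: "xfun F \<Longrightarrow> xfun (pd \<sigma> F)"
proof -
  assume F: "xfun F"
  obtain a b where s: "\<sigma> = (a, b)" by (cases \<sigma>)
  have "pd \<sigma> F p = pd \<sigma> F q" if h: "\<forall>i. p (i, 0) = q (i, 0)" for p q
  proof (cases "b = 0")
    case True
    have "\<And>s. F (p(\<sigma> := s)) = F (q(\<sigma> := s))"
      by (rule xfun_eq[OF F]) (use h in \<open>simp add: s\<close>)
    moreover have "p \<sigma> = q \<sigma>" using h True s by simp
    ultimately show ?thesis unfolding pd_def by simp
  next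
    case False then show ?thesis using pd_y0[OF F] s by simp
  qed
  then show ?thesis using F dpoly_pd unfolding xfun_def by blast
qed

lemma Dx_xfun_N:
  assumes "xfun F" "depends_below N F"
  shows "Dx F p = (\<Sum>i<N. pd (i, 0) F p * p (Suc i, 0))"
  unfolding Dx_N[OF xfun_dpoly[OF assms(1)] assms(2)]
  by (rule sum_j0) (simp add: pd_y0[OF assms(1)])

lemma xfun_Dx: "xfun F \<Longrightarrow> xfun (Dx F)"
proof -
  assume F: "xfun F"
  have d: "depends_below (dsupp F) F" by (rule dsupp[OF xfun_dpoly[OF F]])
  have "Dx F p = Dx F q" if h: "\<forall>i. p (i, 0) = q (i, 0)" for p q
    unfolding Dx_xfun_N[OF F d]
    using h xfun_eq[OF xfun_pd[OF F], of p q] by simp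
  then show ?thesis using F dpoly_Dx unfolding xfun_def by blast
qed

lemma xfun_Dxn: "xfun F \<Longrightarrow> xfun ((Dx ^^ n) F)"
  by (induction n) (auto simp: xfun_Dx)

lemma xfun_const: "xfun (\<lambda>p. c)"
  unfolding xfun_def by (auto intro: dpoly.intros)

lemma xfun_coord: "xfun (\<lambda>p. p (a, 0))"
  unfolding xfun_def by (auto intro: dpoly.intros)

lemma xfun_add: "xfun F \<Longrightarrow> xfun G \<Longrightarrow> xfun (\<lambda>p. F p + G p)"
  unfolding xfun_def by (auto intro: dpoly.intros) (metis (mono_tags))

lemma xfun_mult: "xfun F \<Longrightarrow> xfun G \<Longrightarrow> xfun (\<lambda>p. F p * G p)"
  unfolding xfun_def by (auto intro: dpoly.intros) (metis (mono_tags))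

lemma xfun_neg: "xfun F \<Longrightarrow> xfun (\<lambda>p. - F p)"
  unfolding xfun_def by (auto intro: dpoly_neg)

definition Fr :: "dfun \<Rightarrow> dfun \<Rightarrow> dfun" where
  "Fr F G = (\<lambda>p. \<Sum>i<dsupp F. pd (i, 0) F p * (Dx ^^ i) G p)"

lemma Fr_N:
  assumes "dpoly F" "depends_below N F"
  shows "Fr F G p = (\<Sum>i<N. pd (i, 0) F p * (Dx ^^ i) G p)"
proof -
  have d: "depends_below (dsupp F) F" using dsupp[OF assms(1)] .
  have "Fr F G p = (\<Sum>i<max N (dsupp F). pd (i, 0) F p * (Dx ^^ i) G p)"
    unfolding Fr_def by (intro sum1_ext) (auto simp: pd_out[OF d])
  also have "\<dots> = (\<Sum>i<N. pd (i, 0) F p * (Dx ^^ i) G p)"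
    by (intro sum1_ext[symmetric]) (auto simp: pd_out[OF assms(2)])
  finally show ?thesis .
qed

lemma jbr_Fr:
  assumes F: "xfun F" and G: "xfun G"
  shows "jbr F G p = Fr G F p - Fr F G p"
proof -
  let ?N = "max (dsupp F) (dsupp G)"
  have dF: "depends_below ?N F"
    by (rule depends_below_mono[OF dsupp[OF xfun_dpoly[OF F]]]) simp
  have dG: "depends_below ?N G"
    by (rule depends_below_mono[OF dsupp[OF xfun_dpoly[OF G]]]) simp
  have "jbr F G p = (\<Sum>i<?N. \<Sum>j<?N. (Dx ^^ i) ((Dy ^^ j) F) p * pd (i, j) G p
                  - (Dx ^^ i) ((Dy ^^ j) G) p * pd (i, j) F p)"
    unfolding jbr_def Let_def by simp
  also have "\<dots> = (\<Sum>i<?N. (Dx ^^ i) F p * pd (i, 0) G p - (Dx ^^ i) G p * pd (i, 0) F p)"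
    by (subst sum_j0) (simp_all add: pd_y0[OF F] pd_y0[OF G])
  also have "\<dots> = Fr G F p - Fr F G p"
    unfolding Fr_N[OF xfun_dpoly[OF F] dF] Fr_N[OF xfun_dpoly[OF G] dG]
    by (simp add: sum_subtractf mult.commute)
  finally show ?thesis .
qed


definition sub :: "dfun \<Rightarrow> jet \<Rightarrow> jet" where
  "sub G p = (\<lambda>ab. if snd ab = 1 then (Dx ^^ fst ab) G p else p ab)"

lemma sub_x: "sub G p (i, 0) = p (i, 0)"
  unfolding sub_def by simp

lemma sub_y: "sub G p (i, 1) = (Dx ^^ i) G p"
  unfolding sub_def by simp

lemma xfun_sub: "xfun F \<Longrightarrow> F (sub G p) = F p"
  by (erule xfun_eq) (simp add: sub_x)

inductive lin :: "dfun \<Rightarrow> dfun \<Rightarrow> dfun \<Rightarrow> bool" for G where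
  lin_x: "xfun B \<Longrightarrow> lin G B B"
| lin_y: "xfun A \<Longrightarrow> lin G (\<lambda>p. A p * p (a, 1)) (\<lambda>p. A p * (Dx ^^ a) G p)"
| lin_add: "lin G H1 K1 \<Longrightarrow> lin G H2 K2 \<Longrightarrow> lin G (\<lambda>p. H1 p + H2 p) (\<lambda>p. K1 p + K2 p)"

lemma lin_cong: "lin G H K \<Longrightarrow> H = H' \<Longrightarrow> K = K' \<Longrightarrow> lin G H' K'"
  by simp

lemma lin_props:
  assumes G: "xfun G"
  shows "lin G H K \<Longrightarrow> dpoly H \<and> xfun K \<and> (\<forall>p. H (sub G p) = K p)"
proof (induction rule: lin.induct)
  case (lin_x B) then show ?case by (simp add: xfun_dpoly xfun_sub)
next
  case (lin_y A a)
  have "dpoly (\<lambda>p. A p * p (a, 1))" by (intro dpoly_mult xfun_dpoly lin_y dpoly_coord)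
  moreover have "xfun (\<lambda>p. A p * (Dx ^^ a) G p)" by (intro xfun_mult lin_y xfun_Dxn G)
  moreover have "\<forall>p. A (sub G p) * sub G p (a, 1) = A p * (Dx ^^ a) G p"
    using xfun_sub[OF lin_y] sub_y by metis
  ultimately show ?case by blast
next
  case (lin_add H1 K1 H2 K2) then show ?case by (auto intro: dpoly_add xfun_add)
qed

lemma lin_Dx:
  assumes G: "xfun G"
  shows "lin G H K \<Longrightarrow> lin G (Dx H) (Dx K)"
proof (induction rule: lin.induct)
  case (lin_x B) then show ?case by (simp add: xfun_Dx lin.lin_x)
next
  case (lin_y A a)
  have A: "dpoly A" using lin_y xfun_dpoly by blast
  have e1: "Dx (\<lambda>p. A p * p (a, 1)) = (\<lambda>p. A p * p (Suc a, 1) + Dx A p * p (a, 1))"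
    by (simp add: Dx_mult[OF A dpoly_coord] Dx_coord)
  have e2: "Dx (\<lambda>p. A p * (Dx ^^ a) G p) = (\<lambda>p. A p * (Dx ^^ Suc a) G p + Dx A p * (Dx ^^ a) G p)"
    by (simp add: Dx_mult[OF A dpoly_Dxn[OF xfun_dpoly[OF G]]])
  show ?case unfolding e1 e2
    by (intro lin.lin_add lin.lin_y xfun_Dx lin_y)
next
  case (lin_add H1 K1 H2 K2)
  have "dpoly H1" "dpoly K1" "dpoly H2" "dpoly K2"
    using lin_props[OF G lin_add.hyps(1)] lin_props[OF G lin_add.hyps(2)] xfun_dpoly by auto
  then show ?case by (simp add: Dx_add lin.lin_add lin_add.IH)
qed

definition KG :: "dfun \<Rightarrow> dfun" where
  "KG G = (\<lambda>p. 4 * p (1, 0) * Dx G p + 2 * p (2, 0) * G p - (Dx ^^ 3) G p)"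

lemma lin_Eqn: "xfun G \<Longrightarrow> lin G Eqn (KG G)"
proof -
  have l1: "lin G (\<lambda>p. (2 * p (2, 0)) * p (0, 1)) (\<lambda>p. (2 * p (2, 0)) * (Dx ^^ 0) G p)"
    by (intro lin.lin_y xfun_mult xfun_const xfun_coord)
  have l2: "lin G (\<lambda>p. (4 * p (1, 0)) * p (1, 1)) (\<lambda>p. (4 * p (1, 0)) * (Dx ^^ 1) G p)"
    by (intro lin.lin_y xfun_mult xfun_const xfun_coord)
  have l3: "lin G (\<lambda>p. (-1) * p (3, 1)) (\<lambda>p. (-1) * (Dx ^^ 3) G p)"
    by (intro lin.lin_y xfun_const)
  have "lin G (\<lambda>p. ((2 * p (2, 0)) * p (0, 1) + (4 * p (1, 0)) * p (1, 1)) + (-1) * p (3, 1))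
     (\<lambda>p. ((2 * p (2, 0)) * (Dx ^^ 0) G p + (4 * p (1, 0)) * (Dx ^^ 1) G p) + (-1) * (Dx ^^ 3) G p)"
    by (intro lin.lin_add l1 l2 l3)
  then show ?thesis
    by (rule lin_cong) (auto simp: Eqn_def KG_def fun_eq_iff algebra_simps)
qed

lemma lin_n: "xfun G \<Longrightarrow> lin G ((Dx ^^ m) Eqn) ((Dx ^^ m) (KG G))"
  by (induction m) (auto simp: lin_Eqn lin_Dx)

lemma Eqn_sub: "xfun G \<Longrightarrow> (Dx ^^ m) Eqn (sub G p) = (Dx ^^ m) (KG G) p"
  using lin_props[OF _ lin_n] by blast


lemma sum_drop0:
  assumes "f 0 = 0"
  shows "(\<Sum>i<(N::nat). f i) = (\<Sum>i\<in>{1..<N}. (f i :: real))"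
proof -
  have "\<forall>i\<in>{..<N} - {1..<N}. f i = 0" using assms by (auto simp: Suc_le_eq)
  then show ?thesis by (intro sum.mono_neutral_right) auto
qed

lemma step:
  assumes xf: "\<forall>k. xfun (chi k)"
    and R: "\<forall>k. R0 (chi k) (\<lambda>p. - chi (Suc k) p)"
  shows "Fr (chi (Suc k)) (chi j) p = Fr (chi k) (chi (Suc j)) p
           + 2 * chi j p * Dx (chi k) p - 2 * Dx (chi j) p * chi k p"
proof -
  define \<Phi> where "\<Phi> = chi k"
  define \<Psi> where "\<Psi> = (\<lambda>p. - chi (Suc k) p)"
  define G where "G = chi j"
  have xP: "xfun \<Phi>" and xS: "xfun \<Psi>" and xG: "xfun G" and xS1: "xfun (chi (Suc k))"
    and xG1: "xfun (chi (Suc j))"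
    using xf xfun_neg unfolding \<Phi>_def \<Psi>_def G_def by auto
  have Ry: "\<And>ut. Dy \<Psi> = (\<lambda>p. Dt_x \<Phi> ut p - 2 * p (0, 1) * Dx \<Phi> p + 2 * p (1, 1) * \<Phi> p)"
    using R unfolding R0_def \<Phi>_def \<Psi>_def by blast
  have Rx: "Dx (\<lambda>p. - chi (Suc j) p) = KG G"
    using R unfolding R0_def KG_def G_def by blast
  have pd00: "pd (0, 0) \<Phi> q = 0" for q
  proof -
    have "Dt_x \<Phi> 1 q = Dt_x \<Phi> 0 q" using fun_cong[OF Ry[of 1], of q] fun_cong[OF Ry[of 0], of q] by simp
    then show ?thesis unfolding Dt_x_def by simp
  qed
  define p' where "p' = sub G p"
  have E: "Dy \<Psi> p' = Dt_x \<Phi> 0 p' - 2 * p' (0, 1) * Dx \<Phi> p' + 2 * p' (1, 1) * \<Phi> p'"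
    using fun_cong[OF Ry[of 0], of p'] by simp
  have dS: "depends_below (dsupp \<Psi>) \<Psi>" by (rule dsupp[OF xfun_dpoly[OF xS]])
  then have dS1: "depends_below (dsupp \<Psi>) (chi (Suc k))"
    using depends_below_comb[OF dS dS, where H="\<lambda>x y. - x"] unfolding \<Psi>_def by simp
  have "Dy \<Psi> p' = (\<Sum>i<dsupp \<Psi>. pd (i, 0) \<Psi> p' * p' (i, Suc 0))"
    unfolding Dy_def by (rule sum_j0) (simp add: pd_y0[OF xS])
  also have "\<dots> = (\<Sum>i<dsupp \<Psi>. - (pd (i, 0) (chi (Suc k)) p * (Dx ^^ i) G p))"
  proof (rule sum.cong[OF refl])
    fix i
    have "pd (i, 0) \<Psi> p' = pd (i, 0) \<Psi> p" unfolding p'_def by (rule xfun_sub[OF xfun_pd[OF xS]])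
    moreover have "pd (i, 0) \<Psi> p = - pd (i, 0) (chi (Suc k)) p"
      unfolding \<Psi>_def by (rule pd_neg[OF xfun_dpoly[OF xS1]])
    moreover have "p' (i, Suc 0) = (Dx ^^ i) G p" unfolding p'_def using sub_y by simp
    ultimately show "pd (i, 0) \<Psi> p' * p' (i, Suc 0) = - (pd (i, 0) (chi (Suc k)) p * (Dx ^^ i) G p)"
      by simp
  qed
  also have "\<dots> = - Fr (chi (Suc k)) G p"
    unfolding Fr_N[OF xfun_dpoly[OF xS1] dS1] by (simp add: sum_negf)
  finally have L: "Dy \<Psi> p' = - Fr (chi (Suc k)) G p" .
  have KGn: "(Dx ^^ (i - 1)) (KG G) q = - (Dx ^^ i) (chi (Suc j)) q" if "1 \<le> i" for i q
  proof -
    have "(Dx ^^ (i - 1)) (KG G) = (Dx ^^ (i - 1)) (Dx (\<lambda>p. - chi (Suc j) p))" using Rx by simp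
    also have "\<dots> = (Dx ^^ i) (\<lambda>p. - chi (Suc j) p)"
      using that by (metis Suc_diff_le diff_Suc_1 funpow_Suc_right o_apply)
    also have "\<dots> = (\<lambda>p. - (Dx ^^ i) (chi (Suc j)) p)" by (rule Dxn_neg[OF xfun_dpoly[OF xG1]])
    finally show ?thesis by simp
  qed
  have "Dt_x \<Phi> 0 p' = (\<Sum>i\<in>{1..<dsupp \<Phi>}. pd (i, 0) \<Phi> p' * (Dx ^^ (i - 1)) Eqn p')"
    unfolding Dt_x_def by simp
  also have "\<dots> = (\<Sum>i\<in>{1..<dsupp \<Phi>}. - (pd (i, 0) \<Phi> p * (Dx ^^ i) (chi (Suc j)) p))"
  proof (rule sum.cong[OF refl])
    fix i assume "i \<in> {1..<dsupp \<Phi>}"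
    then have "1 \<le> i" by simp
    have "pd (i, 0) \<Phi> p' = pd (i, 0) \<Phi> p" unfolding p'_def by (rule xfun_sub[OF xfun_pd[OF xP]])
    moreover have "(Dx ^^ (i - 1)) Eqn p' = (Dx ^^ (i - 1)) (KG G) p"
      unfolding p'_def by (rule Eqn_sub[OF xG])
    ultimately show "pd (i, 0) \<Phi> p' * (Dx ^^ (i - 1)) Eqn p' = - (pd (i, 0) \<Phi> p * (Dx ^^ i) (chi (Suc j)) p)"
      using KGn[OF \<open>1 \<le> i\<close>] by simp
  qed
  also have "\<dots> = (\<Sum>i<dsupp \<Phi>. - (pd (i, 0) \<Phi> p * (Dx ^^ i) (chi (Suc j)) p))"
    by (rule sum_drop0[symmetric]) (simp add: pd00)
  also have "\<dots> = - Fr \<Phi> (chi (Suc j)) p"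
    unfolding Fr_def by (simp add: sum_negf)
  finally have T: "Dt_x \<Phi> 0 p' = - Fr \<Phi> (chi (Suc j)) p" .
  have "p' (0, 1) = G p" "p' (1, 1) = Dx G p" unfolding p'_def using sub_y[of G p 0] sub_y[of G p 1] by simp_all
  moreover have "Dx \<Phi> p' = Dx \<Phi> p" unfolding p'_def by (rule xfun_sub[OF xfun_Dx[OF xP]])
  moreover have "\<Phi> p' = \<Phi> p" unfolding p'_def by (rule xfun_sub[OF xP])
  ultimately have "- Fr (chi (Suc k)) G p = - Fr \<Phi> (chi (Suc j)) p - 2 * G p * Dx \<Phi> p + 2 * Dx G p * \<Phi> p"
    using E L T by simp
  then show ?thesis unfolding \<Phi>_def G_def by simp
qed

lemma comb_shift:
  fixes M W :: "nat \<Rightarrow> nat \<Rightarrow> real"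
  assumes S: "\<And>k j. M (Suc k) j = M k (Suc j) + 2 * W j k"
  shows "M (i + d) j - M i (j + d) = 2 * (\<Sum>s<d. W (j + s) (i + d - 1 - s))"
proof (induction d arbitrary: j)
  case 0 then show ?case by simp
next
  case (Suc d)
  have "M (i + Suc d) j - M i (j + Suc d) = 2 * W j (i + d) + (M (i + d) (Suc j) - M i (Suc j + d))"
    using S[of "i + d" j] by simp
  also have "\<dots> = 2 * W j (i + d) + 2 * (\<Sum>s<d. W (Suc j + s) (i + d - 1 - s))"
    using Suc.IH[of "Suc j"] by simp
  also have "\<dots> = 2 * (\<Sum>s<Suc d. W (j + s) (i + Suc d - 1 - s))"
    by (simp only: sum.lessThan_Suc_shift) (simp add: distrib_left)
  finally show ?case .
qed

lemma comb_zero: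
  fixes W :: "nat \<Rightarrow> nat \<Rightarrow> real"
  assumes A: "\<And>a b. W a b = - W b a"
  shows "(\<Sum>s<d. W (j + s) (j + d - 1 - s)) = 0"
proof -
  define f where "f s = W (j + s) (j + d - 1 - s)" for s
  have "(\<Sum>s<d. f s) = (\<Sum>s<d. f (d - Suc s))" by (rule sum.nat_diff_reindex[symmetric])
  also have "\<dots> = (\<Sum>s<d. - f s)"
  proof (rule sum.cong[OF refl])
    fix s assume "s \<in> {..<d}"
    then have "j + (d - Suc s) = j + d - 1 - s" "j + d - 1 - (d - Suc s) = j + s" by auto
    then show "f (d - Suc s) = - f s" unfolding f_def using A[of "j + d - 1 - s" "j + s"] by simp
  qed
  finally have "(\<Sum>s<d. f s) = - (\<Sum>s<d. f s)" by (simp add: sum_negf)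
  then show ?thesis unfolding f_def by simp
qed

lemma comb_sym:
  fixes M W :: "nat \<Rightarrow> nat \<Rightarrow> real"
  assumes S: "\<And>k j. M (Suc k) j = M k (Suc j) + 2 * W j k"
    and A: "\<And>a b. W a b = - W b a"
  shows "M i j = M j i"
proof -
  have *: "M (j + d) j = M j (j + d)" for j d
    using comb_shift[where M=M and W=W, OF S, of j d j] comb_zero[where W=W and d=d and j=j, OF A] by simp
  show ?thesis
  proof (cases "j \<le> i")
    case True then show ?thesis using *[of j "i - j"] by simp
  next
    case False then show ?thesis using *[of i "j - i"] by simp
  qed
qed

theorem proposition3:
  fixes chi :: "nat \<Rightarrow> dfun"
  assumes "\<forall>k. xfun (chi k)"
    and "chi 0 = (\<lambda>p. p (1, 0))"
    and "\<forall>k. R0 (chi k) (\<lambda>p. - chi (Suc k) p)"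
  shows "\<forall>i j. jbr (chi i) (chi j) = (\<lambda>p. 0)"
proof (intro allI ext)
  fix i j p
  define M where "M a b = Fr (chi a) (chi b) p" for a b
  define W where "W a b = chi a p * Dx (chi b) p - chi b p * Dx (chi a) p" for a b
  have S: "M (Suc k) l = M k (Suc l) + 2 * W l k" for k l
    unfolding M_def W_def using step[OF assms(1) assms(3), of k l p] by (simp add: algebra_simps)
  have A: "W a b = - W b a" for a b unfolding W_def by simp
  have "M j i = M i j" by (rule comb_sym[where M=M and W=W, OF S A])
  then show "jbr (chi i) (chi j) p = 0"
    unfolding jbr_Fr[OF assms(1)[rule_format] assms(1)[rule_format]] M_def by simp
qed

end
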